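(* Fix $\lambda\in[0,1)$ and $p\in[0,1]$. There is a unique $\mathbf{v}^I\in\overline{\mathcal{V}}^\infty$ with $\mathbf{F}_i(\mathbf{v}^I)=0$ for all $i\ge 1$. Writing $\mathbf{s}^I_i=\mathbf{v}^I_i-\mathbf{v}^I_{i+1}$ for $i\ge0$, it is given as follows. (1) If $p=0$, then $\mathbf{s}^I_i=\lambda^i$ for all $i\ge1$. (2) If $p\ge\lambda$, then $\mathbf{s}^I_i=0$ for all $i\ge1$. (3) If $0<p<\lambda$ and $\lambda=1-p$, then $\mathbf{s}^I_i=1-\frac{p}{1-p}\,i$ for $1\le i\le \tilde i^*(p,\lambda)$ and $\mathbf{s}^I_i=0$ for $i>\tilde i^*(p,\lambda)$, where $\tilde i^*(p,\lambda)=\lfloor \frac{1-p}{p}\rfloor$. (4) If $0<p<\lambda$ and $\lambda\ne 1-p$, then $\mathbf{s}^I_i=\frac{1-\lambda}{1-(p+\lambda)}\left(\frac{\lambda}{1-p}\right)^i-\frac{p}{1-(p+\lambda)}$ for $1\le i\le i^*(p,\lambda)$ and $\mathbf{s}^I_i=0$ for $i>i^*(p,\lambda)$, where $i^*(p,\lambda)=\left\lfloor \log_{\frac{\lambda}{1-p}}\frac{p}{1-\lambda}\right\rfloor$.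
   Context: $\mathbb{Z}_+=\{0,1,2,\dots\}$. Let $\mathcal{S}=\{\mathbf{s}\in[0,1]^{\mathbb{Z}_+}:1=\mathbf{s}_0\ge\mathbf{s}_1\ge\cdots\ge0\}$, $\overline{\mathcal{S}}^\infty=\{\mathbf{s}\in\mathcal{S}:\sum_{i\ge1}\mathbf{s}_i<\infty\}$, and $\overline{\mathcal{V}}^\infty=\{\mathbf{v}\in\mathbb{R}^{\mathbb{Z}_+}:\mathbf{v}_i=\sum_{j\ge i}\mathbf{s}_j \text{ for all } i, \text{ for some } \mathbf{s}\in\overline{\mathcal{S}}^\infty\}$. For $\mathbf{v}\in\overline{\mathcal{V}}^\infty$ and $i\ge1$ define the drift $\mathbf{F}_i(\mathbf{v})=\lambda(\mathbf{v}_{i-1}-\mathbf{v}_i)-(1-p)(\mathbf{v}_i-\mathbf{v}_{i+1})-g_i(\mathbf{v})$, where $g_i(\mathbf{v})=p$ if $\mathbf{v}_i>0$; $g_i(\mathbf{v})=\min\{\lambda\mathbf{v}_{i-1},p\}$ if $\mathbf{v}_i=0,\mathbf{v}_{i-1}>0$; and $g_i(\mathbf{v})=0$ if $\mathbf{v}_i=\mathbf{v}_{i-1}=0$. *)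

theory Defs
  imports Complex_Main
begin

definition Sbar :: "(nat \<Rightarrow> real) set" where
  "Sbar = {s. s 0 = 1 \<and> (\<forall>i. s (Suc i) \<le> s i) \<and> (\<forall>i. 0 \<le> s i \<and> s i \<le> 1)
              \<and> summable (\<lambda>i. s (i + 1))}"

definition Vbar :: "(nat \<Rightarrow> real) set" where
  "Vbar = {v. \<exists>s\<in>Sbar. \<forall>i. v i = (\<Sum>j. s (j + i))}"

definition gfun :: "real \<Rightarrow> real \<Rightarrow> (nat \<Rightarrow> real) \<Rightarrow> nat \<Rightarrow> real" where
  "gfun lam p v i =
     (if v i > 0 then p
      else if v i = 0 \<and> v (i - 1) > 0 then min (lam * v (i - 1)) p
      else 0)"

definition Fdrift :: "real \<Rightarrow> real \<Rightarrow> (nat \<Rightarrow> real) \<Rightarrow> nat \<Rightarrow> real" where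
  "Fdrift lam p v i = lam * (v (i - 1) - v i) - (1 - p) * (v i - v (i + 1)) - gfun lam p v i"

end

theory Submission
  imports Defs
begin


definition phi :: "real \<Rightarrow> real \<Rightarrow> real \<Rightarrow> real" where
  "phi lam p x = max 0 ((lam * x - p) / (1 - p))"

primrec sq :: "real \<Rightarrow> real \<Rightarrow> nat \<Rightarrow> real" where
  "sq lam p 0 = 1"
| "sq lam p (Suc i) = phi lam p (sq lam p i)"

lemma Sbar_basic:
  assumes "s \<in> Sbar"
  shows "s 0 = 1" "\<And>i. s (Suc i) \<le> s i" "\<And>i. 0 \<le> s i" "\<And>i. s i \<le> 1"
    "\<And>k. summable (\<lambda>j. s (j + k))" "\<And>i j. i \<le> j \<Longrightarrow> s j \<le> s i"
proof -
  show "s 0 = 1" using assms by (simp add: Sbar_def)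
  show A: "\<And>i. s (Suc i) \<le> s i" using assms by (simp add: Sbar_def)
  show "\<And>i. 0 \<le> s i" using assms by (simp add: Sbar_def)
  show "\<And>i. s i \<le> 1" using assms by (simp add: Sbar_def)
  have "summable (\<lambda>i. s (Suc i))" using assms by (simp add: Sbar_def)
  hence "summable s" using summable_Suc_iff by blast
  thus "\<And>k. summable (\<lambda>j. s (j+k))" by (simp add: summable_iff_shift)
  have "decseq s" using A by (intro decseq_SucI)
  thus "\<And>i j. i\<le>j \<Longrightarrow> s j \<le> s i" by (simp add: decseq_def)
qed

lemma V_props:
  assumes "s \<in> Sbar" "\<And>i. v i = (\<Sum>j. s (j + i))"
  shows "v i = s i + v (Suc i)" "0 \<le> v i" "v i = 0 \<longleftrightarrow> s i = 0"
proof -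
  note B = Sbar_basic[OF assms(1)]
  have sm: "summable (\<lambda>j. s (j + i))" by (rule B(5))
  have "(\<Sum>j. s (Suc j + i)) = (\<Sum>j. s (j + i)) - s (0 + i)"
    using suminf_split_head[OF sm] by simp
  then show e: "v i = s i + v (Suc i)" using assms(2)[of i] assms(2)[of "Suc i"] by simp
  have nn: "\<And>k. 0 \<le> v k" using assms(2) B(3) B(5) by (simp add: suminf_nonneg)
  show "0 \<le> v i" by (rule nn)
  show "v i = 0 \<longleftrightarrow> s i = 0"
  proof
    assume "v i = 0" thus "s i = 0" using e nn[of "Suc i"] B(3)[of i] by linarith
  next
    assume z: "s i = 0"
    have "(\<lambda>j. s (j + i)) = (\<lambda>j. 0)"
    proof
      fix j show "s (j + i) = 0" using B(6)[of i "j+i"] B(3)[of "j+i"] z by simp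
    qed
    thus "v i = 0" using assms(2)[of i] by simp
  qed
qed

lemma forward:
  assumes "0 \<le> lam" "lam < 1" "0 \<le> p" "p \<le> 1"
    and S: "s \<in> Sbar" and V: "\<And>i. v i = (\<Sum>j. s (j + i))"
    and F0: "\<forall>i\<ge>1. Fdrift lam p v i = 0"
  shows "s (Suc i) = phi lam p (s i)"
proof -
  note B = Sbar_basic[OF S]
  note VP = V_props[OF S V]
  have F: "Fdrift lam p v (Suc i) = 0" using F0 by simp
  have F': "lam * s i - (1-p) * s (Suc i) - gfun lam p v (Suc i) = 0"
    using F VP(1)[of i] VP(1)[of "Suc i"] by (simp add: Fdrift_def)
  show ?thesis
  proof (cases "s (Suc i) > 0")
    case True
    hence vp: "v (Suc i) > 0" using VP(1)[of "Suc i"] VP(2)[of "Suc (Suc i)"] by linarith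
    hence eq: "lam * s i - (1-p) * s (Suc i) - p = 0" using F' by (simp add: gfun_def)
    have "p \<noteq> 1"
    proof
      assume "p = 1"
      hence "lam * s i = 1" using eq by simp
      moreover have "lam * s i \<le> lam" using B(3)[of i] B(4)[of i] assms(1)
        by (simp add: mult_left_le)
      ultimately show False using assms(2) by linarith
    qed
    hence "s (Suc i) = (lam * s i - p) / (1-p)" using eq assms(4) by (simp add: field_simps)
    thus ?thesis using True by (simp add: phi_def)
  next
    case False
    hence z: "s (Suc i) = 0" using B(3)[of "Suc i"] by linarith
    hence vz: "v (Suc i) = 0" using VP(3) by simp
    show ?thesis
    proof (cases "v i > 0")
      case True
      have vi: "v i = s i" using VP(1)[of i] vz by simp
      have "lam * s i = min (lam * s i) p" using F' True vz vi z by (simp add: gfun_def)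
      hence le: "lam * s i \<le> p" by linarith
      have "(lam * s i - p) / (1 - p) \<le> 0"
        using le assms(4) by (intro divide_nonpos_nonneg) auto
      thus ?thesis using z by (simp add: phi_def)
    next
      case False
      hence "s i = 0" using VP(2)[of i] VP(3)[of i] by simp
      moreover have "(0 - p) / (1 - p) \<le> 0" using assms(3,4) by (intro divide_nonpos_nonneg) auto
      ultimately show ?thesis using z by (simp add: phi_def)
    qed
  qed
qed

lemma forward_sq:
  assumes "0 \<le> lam" "lam < 1" "0 \<le> p" "p \<le> 1"
    and S: "s \<in> Sbar" and V: "\<And>i. v i = (\<Sum>j. s (j + i))"
    and F0: "\<forall>i\<ge>1. Fdrift lam p v i = 0"
  shows "s i = sq lam p i"
proof (induction i)
  case 0 then show ?case using Sbar_basic(1)[OF S] by simp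
next
  case (Suc i) then show ?case using forward[OF assms] by simp
qed

lemma phi_mono: assumes "0 \<le> lam" "p \<le> 1" "x \<le> y" shows "phi lam p x \<le> phi lam p y"
proof -
  have "(lam * x - p) / (1 - p) \<le> (lam * y - p) / (1 - p)"
    using assms by (intro divide_right_mono) (auto intro: mult_left_mono)
  thus ?thesis by (simp add: phi_def)
qed

lemma sq_props:
  assumes "0 \<le> lam" "lam < 1" "0 \<le> p" "p \<le> 1"
  shows "sq lam p (Suc i) \<le> sq lam p i" "0 \<le> sq lam p i" "sq lam p i \<le> 1" "sq lam p i \<le> lam ^ i"
proof -
  show dec: "sq lam p (Suc i) \<le> sq lam p i" for i
  proof (induction i)
    case 0
    have "phi lam p 1 \<le> 1"
    proof (cases "p = 1")
      case True then show ?thesis by (simp add: phi_def)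
    next
      case False
      hence "(lam - p) / (1 - p) \<le> 1" using assms by (simp add: divide_le_eq)
      thus ?thesis by (simp add: phi_def)
    qed
    then show ?case by simp
  next
    case (Suc i) then show ?case using phi_mono[OF assms(1,4)] by simp
  qed
  show nn: "0 \<le> sq lam p i" for i by (cases i) (auto simp: phi_def)
  have "decseq (sq lam p)" using dec by (intro decseq_SucI)
  hence le1: "sq lam p i \<le> sq lam p 0" for i using decseqD[of "sq lam p" 0 i] by simp
  show "sq lam p i \<le> 1" using le1[of i] by simp
  have phile: "phi lam p x \<le> lam * x" if "0 \<le> x" "x \<le> 1" for x
  proof (cases "p = 1")
    case True then show ?thesis using that assms by (simp add: phi_def)
  next
    case False
    have "p * (lam * x) \<le> p" using assms that by (simp add: mult_le_one mult_left_le)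
    hence "(lam * x - p) / (1 - p) \<le> lam * x" using False assms by (simp add: divide_le_eq algebra_simps)
    thus ?thesis using that assms by (simp add: phi_def)
  qed
  show "sq lam p i \<le> lam ^ i"
  proof (induction i)
    case 0 then show ?case by simp
  next
    case (Suc i)
    have "sq lam p (Suc i) \<le> lam * sq lam p i" using phile[OF nn] le1 by simp
    also have "\<dots> \<le> lam * lam ^ i" using Suc assms(1) by (intro mult_left_mono)
    finally show ?case by simp
  qed
qed


lemma sq_Sbar:
  assumes "0 \<le> lam" "lam < 1" "0 \<le> p" "p \<le> 1"
  shows "sq lam p \<in> Sbar"
proof -
  note P = sq_props[OF assms]
  have "summable (\<lambda>i. lam ^ i)" using assms by (simp add: summable_geometric)
  hence "summable (sq lam p)"
    by (rule summable_comparison_test[rotated]) (use P in auto)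
  hence "summable (\<lambda>i. sq lam p (i + 1))" by (simp only: summable_iff_shift)
  thus ?thesis using P by (simp add: Sbar_def)
qed

lemma sq_solves:
  assumes "0 \<le> lam" "lam < 1" "0 \<le> p" "p \<le> 1"
    and V: "\<And>i. v i = (\<Sum>j. sq lam p (j + i))"
    and i1: "i \<ge> 1"
  shows "Fdrift lam p v i = 0"
proof -
  obtain k where k: "i = Suc k" using i1 by (cases i) auto
  note S = sq_Sbar[OF assms(1-4)]
  note VP = V_props[OF S V]
  note B = Sbar_basic[OF S]
  let ?x = "sq lam p k" and ?y = "sq lam p (Suc k)"
  have F: "Fdrift lam p v (Suc k) = lam * ?x - (1-p) * ?y - gfun lam p v (Suc k)"
    using VP(1)[of k] VP(1)[of "Suc k"] by (simp add: Fdrift_def del: sq.simps)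
  have yphi: "?y = phi lam p ?x" by simp
  show ?thesis
  proof (cases "?y > 0")
    case True
    hence vp: "v (Suc k) > 0" using VP(1)[of "Suc k"] VP(2)[of "Suc (Suc k)"] by linarith
    have "p \<noteq> 1" using True yphi by (auto simp: phi_def)
    hence "?y = (lam * ?x - p) / (1-p)" using True yphi by (simp add: phi_def max_def split: if_splits)
    hence "(1-p) * ?y = lam * ?x - p" using \<open>p \<noteq> 1\<close> by (simp add: field_simps)
    thus ?thesis using F vp k by (simp add: gfun_def del: sq.simps)
  next
    case False
    hence z: "?y = 0" using B(3)[of "Suc k"] by linarith
    hence vz: "v (Suc k) = 0" using VP(3) by simp
    show ?thesis
    proof (cases "v k > 0")
      case True
      have vi: "v k = ?x" using VP(1)[of k] vz by simp
      have "lam * ?x \<le> p"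
      proof (cases "p = 1")
        case True
        have "lam * ?x \<le> 1" using B(3)[of k] B(4)[of k] assms by (simp add: mult_le_one)
        thus ?thesis using True by simp
      next
        case False
        have "(lam * ?x - p) / (1-p) \<le> 0" using z yphi by (simp add: phi_def)
        thus ?thesis using False assms by (simp add: divide_le_0_iff)
      qed
      thus ?thesis using F vz vi True k z by (simp add: gfun_def del: sq.simps)
    next
      case False
      hence "v k = 0" using VP(2)[of k] by simp
      thus ?thesis using F vz k z VP(3)[of k] by (simp add: gfun_def del: sq.simps)
    qed
  qed
qed

lemma sq_max:
  assumes "0 < p" "p < 1" "0 \<le> lam" "r 0 = 1" "\<And>i. r (Suc i) = (lam * r i - p) / (1 - p)"
  shows "sq lam p i = max 0 (r i)"
proof (induction i)
  case 0 then show ?case using assms by simp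
next
  case (Suc i)
  show ?case
  proof (cases "r i \<ge> 0")
    case True
    then show ?thesis using Suc assms(5)[of i] by (simp add: phi_def)
  next
    case False
    have "lam * r i \<le> 0" using False assms(3) by (simp add: mult_nonneg_nonpos)
    hence "r (Suc i) < 0" using assms(1,2,5) by (simp add: divide_less_0_iff)
    moreover have "(0 - p) / (1 - p) \<le> 0" using assms by (intro divide_nonpos_nonneg) auto
    ultimately show ?thesis using Suc False by (simp add: phi_def)
  qed
qed


lemma case1: assumes "0 \<le> lam" shows "sq lam 0 i = lam ^ i"
proof (induction i)
  case 0 then show ?case by simp
next
  case (Suc i) then show ?case using assms by (simp add: phi_def)
qed

lemma case2: assumes "0 \<le> lam" "lam \<le> p" "p \<le> 1" "i \<ge> 1" shows "sq lam p i = 0"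
proof -
  have z: "phi lam p x = 0" if "0 \<le> x" "x \<le> 1" for x
  proof (cases "p = 1")
    case True then show ?thesis by (simp add: phi_def)
  next
    case False
    have "lam * x \<le> p" using that assms by (metis mult_left_le order_trans)
    hence "(lam * x - p) / (1 - p) \<le> 0" using False assms by (simp add: divide_le_0_iff)
    then show ?thesis by (simp add: phi_def)
  qed
  have "sq lam p (Suc k) = 0" for k
  proof (induction k)
    case 0 then show ?case using z[of 1] by simp
  next
    case (Suc k) then show ?case using z[of 0] by simp
  qed
  then show ?thesis using assms(4) by (cases i) auto
qed

lemma case3:
  assumes "0 < p" "p < lam" "lam < 1" "lam = 1 - p"
  shows "real i \<le> (1-p)/p \<Longrightarrow> sq lam p i = 1 - p / (1 - p) * real i"
    and "real i > (1-p)/p \<Longrightarrow> sq lam p i = 0"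
proof -
  define r where "r = (\<lambda>i::nat. 1 - p / (1 - p) * real i)"
  have p1: "p < 1" using assms by simp
  have sm: "sq lam p i = max 0 (r i)"
  proof (rule sq_max)
    show "r 0 = 1" by (simp add: r_def)
    fix i show "r (Suc i) = (lam * r i - p) / (1 - p)" 
    proof -
      have "(lam * r i - p) / (1 - p) = r i - p / (1 - p)"
        using p1 by (subst assms(4)) (simp add: diff_divide_distrib)
      also have "\<dots> = r (Suc i)" by (simp add: r_def algebra_simps add_divide_distrib)
      finally show ?thesis by simp
    qed
  qed (use assms p1 in auto)
  have key: "r i \<ge> 0 \<longleftrightarrow> real i \<le> (1-p)/p" using assms p1 by (simp add: r_def field_simps)
  show "real i \<le> (1-p)/p \<Longrightarrow> sq lam p i = 1 - p / (1 - p) * real i"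
    using sm key by (simp add: r_def)
  show "real i > (1-p)/p \<Longrightarrow> sq lam p i = 0"
    using sm key by (simp add: r_def)
qed

lemma case4:
  assumes "0 < p" "p < lam" "lam < 1" "lam \<noteq> 1 - p"
  shows "real i \<le> log (lam / (1 - p)) (p / (1 - lam)) \<Longrightarrow>
           sq lam p i = (1 - lam) / (1 - (p + lam)) * (lam / (1 - p)) ^ i - p / (1 - (p + lam))"
    and "real i > log (lam / (1 - p)) (p / (1 - lam)) \<Longrightarrow> sq lam p i = 0"
proof -
  define c where "c = lam / (1 - p)"
  define D where "D = 1 - (p + lam)"
  define q where "q = p / (1 - lam)"
  define r where "r = (\<lambda>i::nat. (1 - lam) / D * c ^ i - p / D)"
  have p1: "p < 1" using assms by simp
  have D0: "D \<noteq> 0" using assms by (simp add: D_def)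
  have D1: "p + lam \<noteq> 1" "lam + p \<noteq> 1" using D0 by (auto simp: D_def)
  have c0: "c > 0" using assms p1 by (simp add: c_def)
  have q0: "q > 0" using assms by (simp add: q_def)
  have sm: "sq lam p i = max 0 (r i)"
  proof (rule sq_max)
    show "r 0 = 1" using D0 D1 by (simp add: r_def D_def divide_simps)
    fix i
    have e1: "(lam * r i - p) / (1 - p) = c * r i - p / (1 - p)"
      using p1 by (simp add: c_def diff_divide_distrib)
    have e2: "c * (p / D) + p / (1 - p) = p / D"
    proof -
      have p1': "1 - p \<noteq> 0" using p1 by simp
      have a1: "c * (p / D) = (lam * p) / ((1 - p) * D)" by (simp add: c_def)
      have a2: "p / (1 - p) = (p * D) / ((1 - p) * D)" using D0 by simp
      have "c * (p / D) + p / (1 - p) = (lam * p + p * D) / ((1 - p) * D)"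
        unfolding a1 a2 by (simp add: add_divide_distrib)
      also have "\<dots> = p * (lam + D) / ((1 - p) * D)" by (simp add: algebra_simps)
      finally have "c * (p / D) + p / (1 - p) = p * (lam + D) / ((1 - p) * D)" .
      also have "lam + D = 1 - p" by (simp add: D_def)
      finally show ?thesis using p1 D0 by simp
    qed
    have "c * r i - p / (1 - p) = (1 - lam) / D * c ^ Suc i - (c * (p / D) + p / (1 - p))"
      by (simp add: r_def algebra_simps)
    then show "r (Suc i) = (lam * r i - p) / (1 - p)" using e1 e2 by (simp add: r_def)
  qed (use assms p1 in auto)
  have rform: "r i = ((1 - lam) * c ^ i - p) / D" using D0 by (simp add: r_def field_simps)
  have lnc: "ln (c ^ i) = real i * ln c" using c0 by (simp add: ln_realpow)
  have key: "r i \<ge> 0 \<longleftrightarrow> real i \<le> log c q"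
  proof (cases "D > 0")
    case True
    have c1: "c < 1" using True p1 by (simp add: c_def D_def)
    hence lc: "ln c < 0" using c0 by simp
    have "r i \<ge> 0 \<longleftrightarrow> (1 - lam) * c ^ i \<ge> p" using True unfolding rform by (simp add: zero_le_divide_iff)
    also have "\<dots> \<longleftrightarrow> c ^ i \<ge> q" using assms by (simp add: q_def field_simps)
    also have "\<dots> \<longleftrightarrow> ln (c ^ i) \<ge> ln q" using q0 c0 by simp
    also have "\<dots> \<longleftrightarrow> real i \<le> ln q / ln c" using lnc lc by (simp add: le_divide_eq)
    finally show ?thesis by (simp add: log_def)
  next
    case False
    hence Dn: "D < 0" using D0 by simp
    have c1: "c > 1" using Dn p1 by (simp add: c_def D_def)
    hence lc: "ln c > 0" using c0 by simp
    have "r i \<ge> 0 \<longleftrightarrow> (1 - lam) * c ^ i \<le> p" using Dn unfolding rform by (simp add: zero_le_divide_iff)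
    also have "\<dots> \<longleftrightarrow> c ^ i \<le> q" using assms by (simp add: q_def field_simps)
    also have "\<dots> \<longleftrightarrow> ln (c ^ i) \<le> ln q" using q0 c0 by simp
    also have "\<dots> \<longleftrightarrow> real i \<le> ln q / ln c" using lnc lc by (simp add: le_divide_eq)
    finally show ?thesis by (simp add: log_def)
  qed
  show "real i \<le> log (lam / (1 - p)) (p / (1 - lam)) \<Longrightarrow>
           sq lam p i = (1 - lam) / (1 - (p + lam)) * (lam / (1 - p)) ^ i - p / (1 - (p + lam))"
    using sm key by (simp add: r_def c_def q_def D_def)
  show "real i > log (lam / (1 - p)) (p / (1 - lam)) \<Longrightarrow> sq lam p i = 0"
    using sm key by (simp add: r_def c_def q_def D_def)
qed



theorem theorem1:
  fixes lam p :: real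
  assumes "0 \<le> lam" and "lam < 1" and "0 \<le> p" and "p \<le> 1"
  shows "(\<exists>!v. v \<in> Vbar \<and> (\<forall>i\<ge>1. Fdrift lam p v i = 0)) \<and>
    (\<forall>v. v \<in> Vbar \<and> (\<forall>i\<ge>1. Fdrift lam p v i = 0) \<longrightarrow>
      (let s = (\<lambda>i. v i - v (i + 1)) in
        (p = 0 \<longrightarrow> (\<forall>i\<ge>1. s i = lam ^ i)) \<and>
        (p \<ge> lam \<longrightarrow> (\<forall>i\<ge>1. s i = 0)) \<and>
        (0 < p \<and> p < lam \<and> lam = 1 - p \<longrightarrow>
           (\<forall>i\<ge>1. int i \<le> \<lfloor>(1 - p) / p\<rfloor> \<longrightarrow> s i = 1 - p / (1 - p) * real i) \<and>
           (\<forall>i. int i > \<lfloor>(1 - p) / p\<rfloor> \<longrightarrow> s i = 0)) \<and>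
        (0 < p \<and> p < lam \<and> lam \<noteq> 1 - p \<longrightarrow>
           (\<forall>i\<ge>1. int i \<le> \<lfloor>log (lam / (1 - p)) (p / (1 - lam))\<rfloor> \<longrightarrow>
              s i = (1 - lam) / (1 - (p + lam)) * (lam / (1 - p)) ^ i - p / (1 - (p + lam))) \<and>
           (\<forall>i. int i > \<lfloor>log (lam / (1 - p)) (p / (1 - lam))\<rfloor> \<longrightarrow> s i = 0))))"
proof -
  define V0 where "V0 = (\<lambda>i. \<Sum>j. sq lam p (j + i))"
  have S: "sq lam p \<in> Sbar" using sq_Sbar assms by blast
  have V0V: "V0 \<in> Vbar" unfolding Vbar_def V0_def using S by blast
  have V0F: "\<forall>i\<ge>1. Fdrift lam p V0 i = 0"
    using sq_solves[OF assms, of V0] by (simp add: V0_def)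
  have uniq: "v = V0" if hv: "v \<in> Vbar" "\<forall>i\<ge>1. Fdrift lam p v i = 0" for v
  proof -
    obtain s where s: "s \<in> Sbar" "\<And>i. v i = (\<Sum>j. s (j + i))"
      using hv(1) unfolding Vbar_def by blast
    have "\<And>i. s i = sq lam p i" using forward_sq[OF assms s(1) s(2) hv(2)] .
    then show ?thesis using s(2) by (auto simp: V0_def)
  qed
  have sV0: "V0 i - V0 (i + 1) = sq lam p i" for i
    using V_props(1)[OF S, of V0 i] by (simp add: V0_def)
  show ?thesis
  proof (intro conjI allI impI)
    show "\<exists>!v. v \<in> Vbar \<and> (\<forall>i\<ge>1. Fdrift lam p v i = 0)"
      using V0V V0F uniq by blast
  next
    fix v assume v: "v \<in> Vbar \<and> (\<forall>i\<ge>1. Fdrift lam p v i = 0)"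
    hence vv: "v = V0" using uniq by blast
    have sv: "(\<lambda>i. v i - v (i + 1)) = sq lam p" using sV0 vv by auto
    have p1: "0 < p \<Longrightarrow> p < lam \<Longrightarrow> 0 < (1 - p) / p" using assms by simp
    show "let s = (\<lambda>i. v i - v (i + 1)) in
        (p = 0 \<longrightarrow> (\<forall>i\<ge>1. s i = lam ^ i)) \<and>
        (p \<ge> lam \<longrightarrow> (\<forall>i\<ge>1. s i = 0)) \<and>
        (0 < p \<and> p < lam \<and> lam = 1 - p \<longrightarrow>
           (\<forall>i\<ge>1. int i \<le> \<lfloor>(1 - p) / p\<rfloor> \<longrightarrow> s i = 1 - p / (1 - p) * real i) \<and>
           (\<forall>i. int i > \<lfloor>(1 - p) / p\<rfloor> \<longrightarrow> s i = 0)) \<and>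
        (0 < p \<and> p < lam \<and> lam \<noteq> 1 - p \<longrightarrow>
           (\<forall>i\<ge>1. int i \<le> \<lfloor>log (lam / (1 - p)) (p / (1 - lam))\<rfloor> \<longrightarrow>
              s i = (1 - lam) / (1 - (p + lam)) * (lam / (1 - p)) ^ i - p / (1 - (p + lam))) \<and>
           (\<forall>i. int i > \<lfloor>log (lam / (1 - p)) (p / (1 - lam))\<rfloor> \<longrightarrow> s i = 0))"
      unfolding Let_def sv
    proof (intro conjI allI impI)
      fix i :: nat
      assume "p = 0" "1 \<le> i" thus "sq lam p i = lam ^ i" using case1 assms by simp
    next
      fix i :: nat
      assume "lam \<le> p" "1 \<le> i" thus "sq lam p i = 0" using case2 assms by simp
    next
      fix i :: nat
      assume h: "0 < p \<and> p < lam \<and> lam = 1 - p" "int i \<le> \<lfloor>(1 - p) / p\<rfloor>"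
      hence "real i \<le> (1 - p) / p" by (simp add: le_floor_iff)
      thus "sq lam p i = 1 - p / (1 - p) * real i" using case3(1) h assms by blast
    next
      fix i :: nat
      assume h: "0 < p \<and> p < lam \<and> lam = 1 - p" "int i > \<lfloor>(1 - p) / p\<rfloor>"
      hence "real i > (1 - p) / p" by (simp add: floor_less_iff)
      thus "sq lam p i = 0" using case3(2) h assms by blast
    next
      fix i :: nat
      assume h: "0 < p \<and> p < lam \<and> lam \<noteq> 1 - p" "int i \<le> \<lfloor>log (lam / (1 - p)) (p / (1 - lam))\<rfloor>"
      hence "real i \<le> log (lam / (1 - p)) (p / (1 - lam))" by (simp add: le_floor_iff)
      thus "sq lam p i = (1 - lam) / (1 - (p + lam)) * (lam / (1 - p)) ^ i - p / (1 - (p + lam))"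
        using case4(1) h assms by blast
    next
      fix i :: nat
      assume h: "0 < p \<and> p < lam \<and> lam \<noteq> 1 - p" "int i > \<lfloor>log (lam / (1 - p)) (p / (1 - lam))\<rfloor>"
      hence "real i > log (lam / (1 - p)) (p / (1 - lam))" by (simp add: floor_less_iff)
      thus "sq lam p i = 0" using case4(2) h assms by blast
    qed
  qed
qed

end
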